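(* Let $p$ be a prior probability density on $\mathcal{X}$, $L:\mathcal{X}\to[0,\infty)$ a likelihood, $Z(u) = \int_{\{x: L(x)>u\}} p(x)\,dx$, $w:[0,\infty)\to[0,\infty)$ a weight function and $W(u) = \int_0^u w(s)\,ds$. Consider the weighted slice sampler Markov chain $(X_n, U_n)$: given $X_n$, draw $U_{n+1}$ from the density $w(u)\,\mathbb{I}\{0\le u\le L(X_n)\}/W(L(X_n))$; then draw $X_{n+1}$ from the prior $p$ restricted to $\{x: L(x) > U_{n+1}\}$, i.e. with density $p(x)\,\mathbb{I}\{L(x) > U_{n+1}\}/Z(U_{n+1})$. Then for likelihood ordinates $y, z$ (with $W(y)>0$), $$\mathbb{P}\{L(X_{n+1}) \le z \mid L(X_n) = y\} = \int_0^{y\wedge z} \left\{1 - \frac{Z(z)}{Z(u)}\right\} \frac{w(u)}{W(y)}\, du.$$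
   Context: $y\wedge z = \min\{y,z\}$. This chain alternates between the conditionals of the weighted joint distribution $\pi_w(x,u) \propto w(u)\,\mathbb{I}\{0<u<L(x)\}\,p(x)$. *)

theory Defs
  imports "HOL-Analysis.Analysis"
begin

definition Zmass :: "'a measure \<Rightarrow> ('a \<Rightarrow> real) \<Rightarrow> ('a \<Rightarrow> real) \<Rightarrow> real \<Rightarrow> real" where
  "Zmass M p L u = (LINT x:{x\<in>space M. L x > u}|M. p x)"

definition Wcum :: "(real \<Rightarrow> real) \<Rightarrow> real \<Rightarrow> real" where
  "Wcum w u = (LINT s:{0..u}|lborel. w s)"

definition slice_kernel ::
  "'a measure \<Rightarrow> ('a \<Rightarrow> real) \<Rightarrow> ('a \<Rightarrow> real) \<Rightarrow> (real \<Rightarrow> real) \<Rightarrow> 'a \<Rightarrow> 'a set \<Rightarrow> real" where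
  "slice_kernel M p L w x A =
     (LINT u:{0..L x}|lborel. (w u / Wcum w (L x)) *
        (LINT x':{x'\<in>space M. L x' > u}|M. p x' * indicator A x' / Zmass M p L u))"

end

theory Submission
  imports Defs
begin

theorem lemma4:
  fixes M :: "'a measure" and p L :: "'a \<Rightarrow> real" and w :: "real \<Rightarrow> real"
    and x :: 'a and y z :: real
  assumes p_meas: "p \<in> borel_measurable M"
    and p_nonneg: "\<And>x. x \<in> space M \<Longrightarrow> p x \<ge> 0"
    and p_int: "integrable M p"
    and p_prob: "(LINT x|M. p x) = 1"
    and L_meas: "L \<in> borel_measurable M"
    and L_nonneg: "\<And>x. x \<in> space M \<Longrightarrow> L x \<ge> 0"
    and w_meas: "w \<in> borel_measurable borel"
    and w_nonneg: "\<And>s. s \<ge> 0 \<Longrightarrow> w s \<ge> 0"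
    and w_int: "set_integrable lborel {0..y} w"
    and W_pos: "Wcum w y > 0"
    and Z_pos: "\<And>u. 0 \<le> u \<Longrightarrow> u < y \<Longrightarrow> Zmass M p L u > 0"
    and x_in: "x \<in> space M"
    and Lx: "L x = y"
  shows "slice_kernel M p L w x {x'\<in>space M. L x' \<le> z}
         = (LINT u:{0..min y z}|lborel. (1 - Zmass M p L z / Zmass M p L u) * (w u / Wcum w y))"
proof -
  define S where "S u = {x\<in>space M. L x > u}" for u
  define A where "A = {x'\<in>space M. L x' \<le> z}"
  define Z where "Z u = Zmass M p L u" for u
  define W where "W = Wcum w y"
  have S_sets: "S u \<in> sets M" for u unfolding S_def using L_meas by measurable
  have int_S: "integrable M (\<lambda>x. indicator (S u) x * p x)" for u
    using integrable_mult_indicator[OF S_sets p_int] by simp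
  have Z_eq: "Z u = (LINT x|M. indicator (S u) x * p x)" for u
    unfolding Z_def Zmass_def S_def set_lebesgue_integral_def by simp
  define inner where "inner u = (LINT x':S u|M. p x' * indicator A x' / Z u)" for u
  have inner_eq: "inner u = (LINT x|M. indicator (S u) x * indicator A x * p x) / Z u" for u
    unfolding inner_def set_lebesgue_integral_def
    by (simp add: mult.commute mult.left_commute)
  have inner_ge: "inner u = 0" if "z \<le> u" for u
  proof -
    have "(LINT x|M. indicator (S u) x * indicator A x * p x) = (LINT x|M. 0)"
      by (rule Bochner_Integration.integral_cong[OF refl]) (use that in \<open>auto simp: S_def A_def indicator_def\<close>)
    then show ?thesis using inner_eq by simp
  qed
  have inner_lt: "inner u = 1 - Z z / Z u" if "u < z" "Z u > 0" for u
  proof -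
    have "(LINT x|M. indicator (S u) x * indicator A x * p x)
        = (LINT x|M. indicator (S u) x * p x - indicator (S z) x * p x)"
      by (rule Bochner_Integration.integral_cong[OF refl]) (use that in \<open>auto simp: S_def A_def indicator_def\<close>)
    also have "\<dots> = Z u - Z z" using int_S Z_eq by simp
    finally show ?thesis using inner_eq that by (simp add: field_simps)
  qed
  have Z_mono: "Z v \<le> Z u" if "u \<le> v" for u v
    unfolding Z_eq
    by (rule integral_mono[OF int_S int_S])
      (use that p_nonneg in \<open>auto simp: S_def indicator_def\<close>)
  have "mono (\<lambda>u. - Z u)" by (auto simp: mono_def intro: Z_mono)
  then have "(\<lambda>u. - Z u) \<in> borel_measurable borel" by (rule borel_measurable_mono)
  then have "(\<lambda>u. - (- Z u)) \<in> borel_measurable borel" by measurable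
  then have Z_meas: "Z \<in> borel_measurable borel" by simp
  define F where "F u = indicator {0..y} u * (w u / W * inner u)" for u
  define G where "G u = indicator {0..min y z} u * ((1 - Z z / Z u) * (w u / W))" for u
  have G_meas: "G \<in> borel_measurable lborel"
    unfolding G_def using Z_meas w_meas by simp
  have FG: "F u = G u" if "u \<noteq> y" for u
  proof (cases "0 \<le> u \<and> u \<le> y")
    case True
    then have uy: "u < y" using that by simp
    show ?thesis
    proof (cases "u < z")
      case True
      with uy \<open>0 \<le> u \<and> u \<le> y\<close> Z_pos[of u] inner_lt[of u] show ?thesis
        by (simp add: F_def G_def Z_def)
    next
      case False
      with inner_ge[of u] show ?thesis using uy True Z_pos[of u] by (simp add: F_def G_def indicator_def Z_def)
    qed
  next
    case False
    then show ?thesis by (auto simp: F_def G_def indicator_def)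
  qed
  have "F = (\<lambda>u. G u + indicator {y} u * (F y - G y))"
    using FG by (auto simp: fun_eq_iff indicator_def)
  moreover have "(\<lambda>u. G u + indicator {y} u * (F y - G y)) \<in> borel_measurable lborel"
    using G_meas by simp
  ultimately have F_meas: "F \<in> borel_measurable lborel" by simp
  have "integral\<^sup>L lborel F = integral\<^sup>L lborel G"
    by (rule integral_cong_AE[OF F_meas G_meas])
      (use AE_lborel_singleton[of y] in \<open>eventually_elim, simp add: FG\<close>)
  moreover have "slice_kernel M p L w x {x'\<in>space M. L x' \<le> z} = integral\<^sup>L lborel F"
    unfolding slice_kernel_def F_def set_lebesgue_integral_def Lx W_def inner_def A_def S_def Z_def
    by simp
  moreover have "(LINT u:{0..min y z}|lborel. (1 - Zmass M p L z / Zmass M p L u) * (w u / Wcum w y))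
      = integral\<^sup>L lborel G"
    unfolding G_def set_lebesgue_integral_def W_def Z_def by simp
  ultimately show ?thesis by simp
qed

end
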